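(* In the setting below with $\Phi_\lambda=\Phi_{+,\lambda}$, let $x^*\in\mathbb R^n$ with $\Theta(x^* )<\infty$, let $J_*:=\{i\in[r]:(Bx^*-b)_i\ne0\}$ and $\bar J_*:=[r]\setminus J_*$, and consider the convex program $$(\mathrm P_+)\qquad \min_x\ \Theta(x)\quad\text{s.t.}\quad (Bx-b)_{\bar J_*}\le0.$$ Then: (i) $x^*$ is a stationary point of (P) if and only if it is a KKT point of $(\mathrm P_+)$; (ii) $x^*$ is a local minimizer of $F$ if and only if it is a global minimizer of $(\mathrm P_+)$.
   Context: Let $f:\mathbb R^n\to(-\infty,\infty]$, $g:\mathbb R^m\to(-\infty,\infty]$ be proper, lsc and convex; $A\in\mathbb R^{m\times n}$, $B\in\mathbb R^{r\times n}$, $b\in\mathbb R^r$, $\lambda\in\mathbb R^r$, $\lambda>0$. $\Theta(x)=f(x)+g(Ax)$, $\Phi_{+,\lambda}(u)=\sum_{i=1}^r\lambda_i\mathbf 1_{\{u_i>0\}}$, and problem (P) is $\min_x F(x)=\Theta(x)+\Phi_{+,\lambda}(Bx-b)$. $\partial$ denotes the limiting (Mordukhovich) subdifferential (the usual convex subdifferential for convex functions); in particular $\partial\Phi_{+,\lambda}(u)=\{z\in\mathbb R^r: z_i\in\mathbb R_+\text{ if }u_i=0,\ z_i=0\text{ otherwise}\}$. A point $x^*$ is a stationary point of (P) if $0\in\partial f(x^* )+A^\top\partial g(Ax^* )+B^\top\partial\Phi_{+,\lambda}(Bx^*-b)$. A point $x$ is a KKT point of $(\mathrm P_+)$ if there exists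 $\zeta\in\mathbb R^{|\bar J_*|}_+$ with $0\in\partial f(x)+A^\top\partial g(Ax)+B_{\bar J_*:}^\top\zeta$ and $0\le\zeta\perp(Bx-b)_{\bar J_*}\le0$, where $B_{\bar J_*:}$ is the submatrix of rows of $B$ indexed by $\bar J_*$ and $u_{\bar J_*}$ the corresponding subvector. *)

theory Defs
  imports "HOL-Analysis.Analysis"
begin

definition proper_fun :: "('a \<Rightarrow> ereal) \<Rightarrow> bool" where
  "proper_fun f \<longleftrightarrow> (\<forall>x. f x \<noteq> -\<infinity>) \<and> (\<exists>x. f x < \<infinity>)"

definition lsc_fun :: "('a::topological_space \<Rightarrow> ereal) \<Rightarrow> bool" where
  "lsc_fun f \<longleftrightarrow> (\<forall>x. f x \<le> Liminf (at x) f)"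

definition convex_fun :: "('a::real_vector \<Rightarrow> ereal) \<Rightarrow> bool" where
  "convex_fun f \<longleftrightarrow> (\<forall>x y t. 0 \<le> t \<and> t \<le> 1 \<longrightarrow>
      f ((1 - t) *\<^sub>R x + t *\<^sub>R y) \<le> ereal (1 - t) * f x + ereal t * f y)"

text \<open>Convex subdifferential (coincides with the limiting one for proper lsc convex functions).\<close>
definition subdiff :: "('a::real_inner \<Rightarrow> ereal) \<Rightarrow> 'a \<Rightarrow> 'a set" where
  "subdiff f x = {v. \<bar>f x\<bar> \<noteq> \<infinity> \<and> (\<forall>y. f y \<ge> f x + ereal (v \<bullet> (y - x)))}"

definition Phi_plus :: "real^'r \<Rightarrow> real^'r \<Rightarrow> real" where
  "Phi_plus lam u = (\<Sum>i\<in>UNIV. if u $ i > 0 then lam $ i else 0)"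

text \<open>The (limiting) subdifferential of Phi_{+,lambda}, as given explicitly in the paper.\<close>
definition subdiff_Phi_plus :: "real^'r \<Rightarrow> (real^'r) set" where
  "subdiff_Phi_plus u = {z. \<forall>i. (u $ i = 0 \<longrightarrow> z $ i \<ge> 0) \<and> (u $ i \<noteq> 0 \<longrightarrow> z $ i = 0)}"

definition Theta :: "(real^'n \<Rightarrow> ereal) \<Rightarrow> (real^'m \<Rightarrow> ereal) \<Rightarrow> real^'n^'m \<Rightarrow> real^'n \<Rightarrow> ereal" where
  "Theta f g A x = f x + g (A *v x)"

definition F_obj :: "(real^'n \<Rightarrow> ereal) \<Rightarrow> (real^'m \<Rightarrow> ereal) \<Rightarrow> real^'n^'m \<Rightarrow> real^'n^'r
     \<Rightarrow> real^'r \<Rightarrow> real^'r \<Rightarrow> real^'n \<Rightarrow> ereal" where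
  "F_obj f g A B b lam x = Theta f g A x + ereal (Phi_plus lam (B *v x - b))"

definition stationary_P where
  "stationary_P f g A B b x \<longleftrightarrow>
     (\<exists>u\<in>subdiff f x. \<exists>w\<in>subdiff g (A *v x). \<exists>z\<in>subdiff_Phi_plus (B *v x - b).
        u + transpose A *v w + transpose B *v z = 0)"

definition Jbar :: "real^'n^'r \<Rightarrow> real^'r \<Rightarrow> real^'n \<Rightarrow> 'r set" where
  "Jbar B b xs = {i. (B *v xs - b) $ i = 0}"

text \<open>KKT point of (P_+) (constraint index set J, multiplier zeta in R^J_+ encoded as a
  vector in R^r vanishing outside J, so B_J^T zeta_J = B^T zeta).\<close>
definition KKT_Pplus where
  "KKT_Pplus f g A B b J x \<longleftrightarrow>
     (\<exists>\<zeta>::real^'r. (\<forall>i. i \<notin> J \<longrightarrow> \<zeta> $ i = 0) \<and>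
        (\<forall>i\<in>J. \<zeta> $ i \<ge> 0 \<and> (B *v x - b) $ i \<le> 0 \<and> \<zeta> $ i * (B *v x - b) $ i = 0) \<and>
        (\<exists>u\<in>subdiff f x. \<exists>w\<in>subdiff g (A *v x). u + transpose A *v w + transpose B *v \<zeta> = 0))"

definition local_minimizer :: "('a::metric_space \<Rightarrow> ereal) \<Rightarrow> 'a \<Rightarrow> bool" where
  "local_minimizer F xs \<longleftrightarrow> (\<exists>\<epsilon>>0. \<forall>x. dist x xs < \<epsilon> \<longrightarrow> F xs \<le> F x)"

definition feasible_Pplus :: "real^'n^'r \<Rightarrow> real^'r \<Rightarrow> 'r set \<Rightarrow> real^'n \<Rightarrow> bool" where
  "feasible_Pplus B b J x \<longleftrightarrow> (\<forall>i\<in>J. (B *v x - b) $ i \<le> 0)"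

definition global_minimizer_Pplus where
  "global_minimizer_Pplus f g A B b J xs \<longleftrightarrow> feasible_Pplus B b J xs \<and>
     (\<forall>x. feasible_Pplus B b J x \<longrightarrow> Theta f g A xs \<le> Theta f g A x)"

end

theory Submission
  imports Defs
begin

lemma lsc_eventually:
  fixes h :: "'a::topological_space \<Rightarrow> ereal"
  assumes "lsc_fun h" "c < h z"
  shows "eventually (\<lambda>y. c < h y) (nhds z)"
proof -
  have "h z \<le> Liminf (at z) h" using assms(1) unfolding lsc_fun_def by blast
  then have "eventually (\<lambda>y. c < h y) (at z)" using assms(2) le_Liminf_iff by blast
  then have "eventually (\<lambda>y. y \<noteq> z \<longrightarrow> c < h y) (nhds z)"
    by (simp add: eventually_at_filter)
  then show ?thesis by (rule eventually_mono) (use assms(2) in auto)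
qed

lemma lin_comb:
  fixes B :: "real^'n^'r"
  shows "B *v ((1 - t) *\<^sub>R x + t *\<^sub>R y) = (1 - t) *\<^sub>R (B *v x) + t *\<^sub>R (B *v y)"
  by (simp add: matrix_vector_right_distrib matrix_vector_mult_scaleR)

theorem mainTheorem10:
  fixes f :: "real^'n \<Rightarrow> ereal" and g :: "real^'m \<Rightarrow> ereal"
    and A :: "real^'n^'m" and B :: "real^'n^'r" and b lam :: "real^'r"
    and xs :: "real^'n"
  assumes f: "proper_fun f" "lsc_fun f" "convex_fun f"
    and g: "proper_fun g" "lsc_fun g" "convex_fun g"
    and lam: "\<forall>i. lam $ i > 0"
    and fin: "Theta f g A xs < \<infinity>"
  shows "(stationary_P f g A B b xs \<longleftrightarrow> KKT_Pplus f g A B b (Jbar B b xs) xs)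
       \<and> (local_minimizer (F_obj f g A B b lam) xs \<longleftrightarrow>
            global_minimizer_Pplus f g A B b (Jbar B b xs) xs)"
proof
  show "stationary_P f g A B b xs \<longleftrightarrow> KKT_Pplus f g A B b (Jbar B b xs) xs"
  proof
    assume "stationary_P f g A B b xs"
    then obtain u w z where uwz: "u\<in>subdiff f xs" "w\<in>subdiff g (A *v xs)"
      "z\<in>subdiff_Phi_plus (B *v xs - b)" "u + transpose A *v w + transpose B *v z = 0"
      unfolding stationary_P_def by blast
    show "KKT_Pplus f g A B b (Jbar B b xs) xs"
      unfolding KKT_Pplus_def
      apply (rule exI[of _ z])
      using uwz unfolding subdiff_Phi_plus_def Jbar_def by auto
  next
    assume "KKT_Pplus f g A B b (Jbar B b xs) xs"
    then obtain z where z: "\<forall>i. i \<notin> Jbar B b xs \<longrightarrow> z $ i = 0"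
        "\<forall>i\<in>Jbar B b xs. z $ i \<ge> 0"
      and "\<exists>u\<in>subdiff f xs. \<exists>w\<in>subdiff g (A *v xs). u + transpose A *v w + transpose B *v z = 0"
      unfolding KKT_Pplus_def by blast
    moreover have "z \<in> subdiff_Phi_plus (B *v xs - b)"
      using z unfolding subdiff_Phi_plus_def Jbar_def by auto
    ultimately show "stationary_P f g A B b xs"
      unfolding stationary_P_def by blast
  qed
next
  define J where "J = Jbar B b xs"
  define T where "T = Theta f g A"
  define Ph where "Ph = (\<lambda>y. Phi_plus lam (B *v y - b))"
  have FT: "F_obj f g A B b lam y = T y + ereal (Ph y)" for y
    unfolding F_obj_def T_def Ph_def by simp
  have fninf: "f y \<noteq> -\<infinity>" for y using f(1) unfolding proper_fun_def by blast
  have gninf: "g y \<noteq> -\<infinity>" for y using g(1) unfolding proper_fun_def by blast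
  obtain a where a: "f xs = ereal a"
    using fin fninf[of xs] gninf[of "A *v xs"] unfolding Theta_def
    by (cases "f xs"; cases "g (A *v xs)") auto
  obtain c where c: "g (A *v xs) = ereal c"
    using fin fninf[of xs] gninf[of "A *v xs"] unfolding Theta_def
    by (cases "f xs"; cases "g (A *v xs)") auto
  have Txs: "T xs = ereal (a + c)" unfolding T_def Theta_def using a c by simp
  define S where "S = (\<lambda>y. \<forall>i. ((B *v xs - b) $ i > 0 \<longrightarrow> (B *v y - b) $ i > 0) \<and>
     ((B *v xs - b) $ i < 0 \<longrightarrow> (B *v y - b) $ i < 0))"
  have evS: "eventually S (nhds xs)"
  proof -
    have "eventually (\<lambda>y. ((B *v xs - b) $ i > 0 \<longrightarrow> (B *v y - b) $ i > 0) \<and>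
     ((B *v xs - b) $ i < 0 \<longrightarrow> (B *v y - b) $ i < 0)) (nhds xs)" for i
    proof -
      have t: "((\<lambda>y. (B *v y - b) $ i) \<longlongrightarrow> (B *v xs - b) $ i) (nhds xs)"
        using matrix_vector_mult_linear_continuous_at[where A=B]
        by (intro tendsto_intros) (simp add: isCont_def tendsto_nhds_iff)
      show ?thesis
      proof (cases "(B *v xs - b) $ i > 0")
        case True
        from order_tendstoD(1)[OF t True] show ?thesis
          by (rule eventually_mono) (use True in auto)
      next
        case F: False
        show ?thesis
        proof (cases "(B *v xs - b) $ i < 0")
          case True
          from order_tendstoD(2)[OF t True] show ?thesis
            by (rule eventually_mono) (use True in auto)
        next
          case False
          then show ?thesis using F by auto
        qed
      qed
    qed
    then show ?thesis unfolding S_def by (simp add: eventually_all_finite)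
  qed
  have Ph_feas: "Ph y = Ph xs" if "S y" "feasible_Pplus B b J y" for y
    unfolding Ph_def Phi_plus_def
  proof (rule sum.cong[OF refl])
    fix i
    show "(if 0 < (B *v y - b) $ i then lam $ i else 0) =
          (if 0 < (B *v xs - b) $ i then lam $ i else 0)"
    proof (cases "(B *v xs - b) $ i = 0")
      case True
      then have "i \<in> J" unfolding J_def Jbar_def by simp
      then have "(B *v y - b) $ i \<le> 0" using that(2) unfolding feasible_Pplus_def by blast
      then show ?thesis using True by simp
    next
      case False
      then show ?thesis using that(1) unfolding S_def
        by (metis linorder_neqE_linordered_idom order_less_asym)
    qed
  qed
  define \<delta> where "\<delta> = Min (range (\<lambda>i. lam $ i))"
  have dpos: "\<delta> > 0" unfolding \<delta>_def using lam by (subst Min_gr_iff) auto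
  have dle: "\<delta> \<le> lam $ i" for i unfolding \<delta>_def by (rule Min_le) auto
  have Ph_infeas: "Ph y \<ge> Ph xs + \<delta>" if Sy: "S y" and nf: "\<not> feasible_Pplus B b J y" for y
  proof -
    obtain i0 where i0: "i0 \<in> J" "(B *v y - b) $ i0 > 0"
      using nf unfolding feasible_Pplus_def by force
    have xs0: "(B *v xs - b) $ i0 = 0" using i0(1) unfolding J_def Jbar_def by simp
    let ?d = "\<lambda>i. (if 0 < (B *v y - b) $ i then lam $ i else 0) -
          (if 0 < (B *v xs - b) $ i then lam $ i else 0)"
    have dn: "?d i \<ge> 0" for i
      using Sy lam[rule_format, of i] unfolding S_def by auto
    have "?d i0 \<le> sum ?d UNIV"
      by (rule member_le_sum) (use dn in auto)
    moreover have "?d i0 = lam $ i0" using i0 xs0 by simp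
    moreover have "sum ?d UNIV = Ph y - Ph xs"
      unfolding Ph_def Phi_plus_def by (simp add: sum_subtractf)
    ultimately show ?thesis using dle[of i0] by simp
  qed
  have xs_feas: "feasible_Pplus B b J xs" unfolding feasible_Pplus_def J_def Jbar_def by simp
  show "local_minimizer (F_obj f g A B b lam) xs \<longleftrightarrow> global_minimizer_Pplus f g A B b J xs"
  proof
    assume "local_minimizer (F_obj f g A B b lam) xs"
    then obtain e where e: "e > 0" "\<And>x. dist x xs < e \<Longrightarrow> T xs + ereal (Ph xs) \<le> T x + ereal (Ph x)"
      unfolding local_minimizer_def FT by blast
    obtain d where d: "d > 0" "\<And>y. dist y xs < d \<Longrightarrow> S y"
      using evS unfolding eventually_nhds_metric by blast
    have "T xs \<le> T x" if xf: "feasible_Pplus B b J x" for x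
    proof (cases "T x = \<infinity>")
      case True then show ?thesis by simp
    next
      case False
      obtain p where p: "f x = ereal p"
        using False fninf[of x] gninf[of "A *v x"] unfolding T_def Theta_def
        by (cases "f x"; cases "g (A *v x)") auto
      obtain q where q: "g (A *v x) = ereal q"
        using False fninf[of x] gninf[of "A *v x"] unfolding T_def Theta_def
        by (cases "f x"; cases "g (A *v x)") auto
      define t where "t = min 1 (min d e / (2 * (dist x xs + 1)))"
      have "2 * dist x xs + 2 > 0" using zero_le_dist[of x xs] by linarith
      then have t0: "t > 0" unfolding t_def using d e by (simp add: add_pos_nonneg)
      have t1: "t \<le> 1" unfolding t_def by simp
      define xt where "xt = (1 - t) *\<^sub>R xs + t *\<^sub>R x"
      have "dist xt xs = t * dist x xs"
      proof -
        have "xt - xs = t *\<^sub>R (x - xs)" unfolding xt_def by (simp add: algebra_simps)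
        then show ?thesis using t0 by (simp add: dist_norm)
      qed
      also have "\<dots> < min d e"
      proof -
        have "t * dist x xs \<le> (min d e / (2 * (dist x xs + 1))) * dist x xs"
          unfolding t_def by (intro mult_right_mono) auto
        also have "\<dots> < min d e"
        proof -
          have m: "min d e > 0" using d e by simp
          have D: "dist x xs \<ge> 0" by simp
          have "min d e * dist x xs < min d e * (2 * (dist x xs + 1))"
            using m D by (intro mult_strict_left_mono) (auto simp: add_nonneg_pos)
          moreover have pos: "2 * (dist x xs + 1) > 0" using D by (intro mult_pos_pos add_nonneg_pos) auto
          ultimately have "(min d e * dist x xs) / (2 * (dist x xs + 1)) < min d e"
            by (subst pos_divide_less_eq[OF pos]) simp
          then show ?thesis by simp
        qed
        finally show ?thesis .
      qed
      finally have dxt: "dist xt xs < d" "dist xt xs < e" by auto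
      have xtf: "feasible_Pplus B b J xt"
        unfolding feasible_Pplus_def
      proof
        fix i assume i: "i \<in> J"
        have "(B *v xt - b) $ i = (1 - t) * (B *v xs - b) $ i + t * (B *v x - b) $ i"
          unfolding xt_def lin_comb by (simp add: algebra_simps)
        moreover have "(B *v xs - b) $ i = 0" using i unfolding J_def Jbar_def by simp
        moreover have "(B *v x - b) $ i \<le> 0" using xf i unfolding feasible_Pplus_def by blast
        ultimately show "(B *v xt - b) $ i \<le> 0" using t0 by (simp add: mult_nonneg_nonpos)
      qed
      have "Ph xt = Ph xs" using Ph_feas[OF d(2)[OF dxt(1)] xtf] .
      then have le1: "T xs \<le> T xt" using e(2)[OF dxt(2)] Txs by (cases "T xt") auto
      have cf: "f xt \<le> ereal (1 - t) * f xs + ereal t * f x"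
        using f(3) t0 t1 unfolding convex_fun_def xt_def by auto
      have cg: "g (A *v xt) \<le> ereal (1 - t) * g (A *v xs) + ereal t * g (A *v x)"
        using g(3) t0 t1 unfolding convex_fun_def xt_def lin_comb by auto
      have "T xt \<le> ereal ((1 - t) * (a + c) + t * (p + q))"
      proof -
        have "T xt = f xt + g (A *v xt)" unfolding T_def Theta_def by simp
        also have "\<dots> \<le> ereal ((1 - t) * a + t * p) + ereal ((1 - t) * c + t * q)"
          by (rule add_mono) (use cf cg a c p q in auto)
        finally show ?thesis by (simp add: algebra_simps)
      qed
      with le1 Txs have "ereal (a + c) \<le> ereal ((1 - t) * (a + c) + t * (p + q))"
        by (metis order_trans)
      then have "a + c \<le> (1 - t) * (a + c) + t * (p + q)" by simp
      then have "t * (a + c) \<le> t * (p + q)" by (simp add: algebra_simps)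
      then have "a + c \<le> p + q" using t0 by simp
      then show ?thesis using Txs p q unfolding T_def Theta_def by simp
    qed
    then show "global_minimizer_Pplus f g A B b J xs"
      unfolding global_minimizer_Pplus_def T_def using xs_feas by blast
  next
    assume gm: "global_minimizer_Pplus f g A B b J xs"
    have ef: "eventually (\<lambda>y. ereal (a - \<delta>/2) < f y) (nhds xs)"
      by (rule lsc_eventually[OF f(2)]) (use a dpos in simp)
    have eg0: "eventually (\<lambda>z. ereal (c - \<delta>/2) < g z) (nhds (A *v xs))"
      by (rule lsc_eventually[OF g(2)]) (use c dpos in simp)
    have lim: "filterlim (\<lambda>y. A *v y) (nhds (A *v xs)) (nhds xs)"
      using matrix_vector_mult_linear_continuous_at by (simp add: isCont_def tendsto_nhds_iff)
    have eg: "eventually (\<lambda>y. ereal (c - \<delta>/2) < g (A *v y)) (nhds xs)"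
      using eventually_compose_filterlim[OF eg0 lim] .
    have "eventually (\<lambda>y. S y \<and> ereal (a - \<delta>/2) < f y \<and> ereal (c - \<delta>/2) < g (A *v y)) (nhds xs)"
      using evS ef eg by (auto elim: eventually_elim2 eventually_mono intro: eventually_conj)
    then obtain e where e: "e > 0" "\<And>y. dist y xs < e \<Longrightarrow>
        S y \<and> ereal (a - \<delta>/2) < f y \<and> ereal (c - \<delta>/2) < g (A *v y)"
      unfolding eventually_nhds_metric by blast
    have "T xs + ereal (Ph xs) \<le> T y + ereal (Ph y)" if dy: "dist y xs < e" for y
    proof (cases "feasible_Pplus B b J y")
      case True
      then have "T xs \<le> T y" using gm unfolding global_minimizer_Pplus_def T_def by blast
      moreover have "Ph y = Ph xs" using Ph_feas e(2)[OF dy] True by blast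
      ultimately show ?thesis by (simp add: add_right_mono)
    next
      case False
      have Pg: "Ph y \<ge> Ph xs + \<delta>" using Ph_infeas e(2)[OF dy] False by blast
      have fy: "ereal (a - \<delta>/2) < f y" and gy: "ereal (c - \<delta>/2) < g (A *v y)"
        using e(2)[OF dy] by auto
      show ?thesis
      proof (cases "f y = \<infinity> \<or> g (A *v y) = \<infinity>")
        case True
        then have "T y = \<infinity>" unfolding T_def Theta_def using fninf gninf by auto
        then show ?thesis by simp
      next
        case False
        then obtain p q where p: "f y = ereal p" and q: "g (A *v y) = ereal q"
          using fninf[of y] gninf[of "A *v y"]
          by (cases "f y"; cases "g (A *v y)") auto
        have "a - \<delta>/2 < p" "c - \<delta>/2 < q" using fy gy p q by auto
        then show ?thesis using Txs p q Pg unfolding T_def Theta_def by simp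
      qed
    qed
    then show "local_minimizer (F_obj f g A B b lam) xs"
      unfolding local_minimizer_def FT using e(1) by blast
  qed
qed

end
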